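(* Let $p$ be an odd prime, $m\ge 2$ an integer, $q=p^m$. Consider the map $\tau$ sending a pair of integers $(q_1,q_2)$ with $q_1,q_2,q_1+q_2,q_1-q_2$ all $\not\equiv 0\pmod q$ to the $m$-tuple of polynomials \[\tau(q_1,q_2)=\big(\psi(q_1,q_2),\ \alpha^{(1)}(q_1,q_2),\dots,\alpha^{(m-1)}(q_1,q_2)\big).\] Then $\tau$ takes at most $m^2$ distinct values.
   Context: Let $\gamma=e^{2\pi i/q}$. Let $A$ be the set of residues mod $q$ (in $\{1,\dots,q-1\}$) coprime to $q$, and for $1\le j\le m-1$ let $B_j=\{x\in\{1,\dots,q-1\}: p^j\mid x,\ p^{j+1}\nmid x\}$. For a pair $(q_1,q_2)$ define $\psi(q_1,q_2)(z)=\sum_{l\in A}\prod_{i=1}^{2}(z-\gamma^{q_il})(z-\gamma^{-q_il})$ and $\alpha^{(j)}(q_1,q_2)(z)=\sum_{l\in B_j}\prod_{i=1}^{2}(z-\gamma^{q_il})(z-\gamma^{-q_il})$, polynomials in $\mathbf{Q}(\gamma)[z]$. *)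

theory Defs
  imports "HOL-Analysis.Analysis" "HOL-Computational_Algebra.Polynomial"
begin

definition gam :: "nat \<Rightarrow> complex" where
  "gam q = exp (2 * of_real pi * \<i> / of_nat q)"

definition setA :: "nat \<Rightarrow> int set" where
  "setA q = {l \<in> {1..int q - 1}. coprime l (int q)}"

definition setB :: "nat \<Rightarrow> nat \<Rightarrow> nat \<Rightarrow> int set" where
  "setB p q j = {x \<in> {1..int q - 1}. int p ^ j dvd x \<and> \<not> int p ^ (j + 1) dvd x}"

definition summand :: "nat \<Rightarrow> int \<Rightarrow> int \<Rightarrow> int \<Rightarrow> complex poly" where
  "summand q q1 q2 l =
    
     ([:- (gam q powi (q1 * l)), 1:] * [:- (gam q powi (- (q1 * l))), 1:]) *
     ([:- (gam q powi (q2 * l)), 1:] * [:- (gam q powi (- (q2 * l))), 1:])"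

definition psi :: "nat \<Rightarrow> int \<Rightarrow> int \<Rightarrow> complex poly" where
  "psi q q1 q2 = (\<Sum>l\<in>setA q. summand q q1 q2 l)"

definition alpha :: "nat \<Rightarrow> nat \<Rightarrow> nat \<Rightarrow> int \<Rightarrow> int \<Rightarrow> complex poly" where
  "alpha p q j q1 q2 = (\<Sum>l\<in>setB p q j. summand q q1 q2 l)"

definition tau :: "nat \<Rightarrow> nat \<Rightarrow> int \<Rightarrow> int \<Rightarrow> complex poly list" where
  "tau p m q1 q2 = psi (p ^ m) q1 q2 # map (\<lambda>j. alpha p (p ^ m) j q1 q2) [1..<m]"

end

theory Submission imports Defs begin

lemma gam_nz: "gam q \<noteq> 0" by (simp add: gam_def)

lemma gam_pow: assumes "q > 0" shows "gam q ^ q = 1"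
proof -
  have "gam q ^ q = exp (of_nat q * (2 * of_real pi * \<i> / of_nat q))"
    unfolding gam_def by (rule exp_of_nat_mult[symmetric])
  also have "of_nat q * (2 * of_real pi * \<i> / of_nat q) = 2 * of_real pi * (\<i>::complex)"
    using assms by simp
  finally show ?thesis by simp
qed

lemma gam_powi_mod: assumes "q > 0" "a mod int q = b mod int q"
  shows "gam q powi a = gam q powi b"
proof -
  have "int q dvd a - b" using assms(2) by (simp add: mod_eq_dvd_iff)
  then obtain t where t: "a = b + int q * t"
    by (metis add.commute diff_add_cancel dvdE)
  have "gam q powi a = gam q powi b * (gam q powi int q) powi t"
    by (simp add: t power_int_add power_int_mult gam_nz)
  also have "gam q powi int q = 1" using gam_pow[OF assms(1)] by (simp add: power_int_of_nat)
  finally show ?thesis by simp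
qed

lemma lin2: "a * b = (1::complex) \<Longrightarrow> [:-a,1:]*[:-b,1:] = [:1, -(a+b), 1:]"
  by (simp add: algebra_simps)

lemma quad2: "[:1,-s1,1:]*[:1,-s2,1:] = [:1,0,2,0,1::complex:] + smult (s1+s2) [:0,-1,0,-1:] + smult (s1 * s2) [:0,0,1:]"
  by (simp add: algebra_simps)

definition CS :: "nat \<Rightarrow> int set \<Rightarrow> int \<Rightarrow> complex" where
  "CS q L k = (\<Sum>l\<in>L. gam q powi (k*l) + gam q powi (-(k*l)))"

definition P0 :: "complex poly" where "P0 = [:1,0,2,0,1:]"
definition P1 :: "complex poly" where "P1 = [:0,-1,0,-1:]"
definition P2 :: "complex poly" where "P2 = [:0,0,1:]"

lemma summand_eq: "summand q q1 q2 l = P0 +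
   smult (gam q powi (q1*l) + gam q powi (-(q1*l)) + (gam q powi (q2*l) + gam q powi (-(q2*l)))) P1
 + smult (gam q powi ((q1+q2)*l) + gam q powi (-((q1+q2)*l)) + (gam q powi ((q1-q2)*l) + gam q powi (-((q1-q2)*l)))) P2"
proof -
  let ?E = "\<lambda>k. gam q powi k"
  have inv: "?E k * ?E (-k) = 1" for k by (simp add: power_int_minus gam_nz)
  have "summand q q1 q2 l = [:1, -(?E (q1*l) + ?E (-(q1*l))), 1:] * [:1, -(?E (q2*l) + ?E (-(q2*l))), 1:]"
  proof -
    have h1: "[:-?E (q1*l),1:]*[:-?E (-(q1*l)),1:] = [:1, -(?E (q1*l) + ?E (-(q1*l))), 1:]"
      by (rule lin2) (rule inv)
    have h2: "[:-?E (q2*l),1:]*[:-?E (-(q2*l)),1:] = [:1, -(?E (q2*l) + ?E (-(q2*l))), 1:]"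
      by (rule lin2) (rule inv)
    show ?thesis unfolding summand_def h1 h2 ..
  qed
  also have "\<dots> = P0 + smult (?E (q1*l) + ?E (-(q1*l)) + (?E (q2*l) + ?E (-(q2*l)))) P1
     + smult ((?E (q1*l) + ?E (-(q1*l))) * (?E (q2*l) + ?E (-(q2*l)))) P2"
    unfolding P0_def P1_def P2_def by (rule quad2)
  also have "(?E (q1*l) + ?E (-(q1*l))) * (?E (q2*l) + ?E (-(q2*l))) =
     ?E ((q1+q2)*l) + ?E (-((q1+q2)*l)) + (?E ((q1-q2)*l) + ?E (-((q1-q2)*l)))"
    by (simp add: algebra_simps power_int_add[symmetric] gam_nz)
  finally show ?thesis .
qed

lemma sum_summand: assumes "finite L" shows "(\<Sum>l\<in>L. summand q q1 q2 l) =
  smult (of_nat (card L)) P0 + smult (CS q L q1 + CS q L q2) P1 + smult (CS q L (q1+q2) + CS q L (q1-q2)) P2"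
  unfolding summand_eq CS_def
  by (simp add: sum.distrib smult_sum[symmetric] smult_add_left of_nat_poly)

lemma reindex_mod:
  fixes q :: int
  assumes q: "q > 0" and cop: "coprime a q" and Lsub: "L \<subseteq> {0..q-1}" and fin: "finite L"
    and inv: "\<And>x. x \<in> L \<Longrightarrow> (a*x) mod q \<in> L"
  shows "(\<Sum>l\<in>L. f ((a*l) mod q)) = (\<Sum>l\<in>L. f l)"
proof -
  let ?g = "\<lambda>l. (a*l) mod q"
  have inj: "inj_on ?g L"
  proof (rule inj_onI)
    fix x y assume xy: "x \<in> L" "y \<in> L" "?g x = ?g y"
    hence "q dvd a*x - a*y" by (simp add: mod_eq_dvd_iff)
    hence "q dvd a*(x - y)" by (simp add: algebra_simps)
    hence d: "q dvd x - y" using cop by (simp add: coprime_dvd_mult_right_iff coprime_commute)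
    have "x \<in> {0..q-1}" "y \<in> {0..q-1}" using xy Lsub by auto
    hence "\<bar>x - y\<bar> < q" by auto
    show "x = y"
    proof (rule ccontr)
      assume "x \<noteq> y" hence "x - y \<noteq> 0" by simp
      from dvd_imp_le_int[OF this d] have "\<bar>q\<bar> \<le> \<bar>x - y\<bar>" .
      with \<open>\<bar>x - y\<bar> < q\<close> show False by simp
    qed
  qed
  have sub: "?g ` L \<subseteq> L" using inv by auto
  have eq: "?g ` L = L"
    by (rule card_subset_eq[OF fin sub]) (simp add: card_image[OF inj])
  have "(\<Sum>l\<in>L. f ((a*l) mod q)) = (\<Sum>l\<in>?g ` L. f l)"
    by (simp add: sum.reindex[OF inj])
  also have "\<dots> = (\<Sum>l\<in>L. f l)" by (simp add: eq)
  finally show ?thesis .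
qed

lemma CS_unit:
  assumes q: "q > 0" and cop: "coprime a (int q)" and Lsub: "L \<subseteq> {0..int q-1}" and fin: "finite L"
    and inv: "\<And>x. x \<in> L \<Longrightarrow> (a*x) mod int q \<in> L"
  shows "CS q L (k*a) = CS q L k"
proof -
  let ?f = "\<lambda>l. gam q powi (k*l) + gam q powi (-(k*l))"
  have "CS q L (k*a) = (\<Sum>l\<in>L. ?f ((a*l) mod int q))"
    unfolding CS_def
  proof (rule sum.cong[OF refl])
    fix l
    have e1: "(k*a*l) mod int q = (k*((a*l) mod int q)) mod int q"
      by (simp add: mod_mult_right_eq mult.assoc)
    have e2: "(-(k*a*l)) mod int q = (-(k*((a*l) mod int q))) mod int q"
      using e1 by (metis mod_minus_eq)
    show "gam q powi (k*a*l) + gam q powi (-(k*a*l)) = ?f ((a*l) mod int q)"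
      using gam_powi_mod[OF q e1] gam_powi_mod[OF q e2] by simp
  qed
  also have "\<dots> = (\<Sum>l\<in>L. ?f l)"
    by (rule reindex_mod) (use q cop Lsub fin inv in auto)
  finally show ?thesis unfolding CS_def .
qed

definition good :: "nat \<Rightarrow> int set \<Rightarrow> bool" where
  "good q L \<longleftrightarrow> L \<subseteq> {1..int q-1} \<and> (\<forall>a x. coprime a (int q) \<longrightarrow> x\<in>L \<longrightarrow> (a*x) mod int q \<in> L)"

lemma mod_nz:
  fixes q :: int
  assumes "coprime a q" "x \<in> {1..q-1}" shows "(a*x) mod q \<in> {1..q-1}"
proof -
  have q: "q > 0" using assms(2) by auto
  have "(a*x) mod q \<noteq> 0"
  proof
    assume "(a*x) mod q = 0" hence "q dvd a*x" by auto
    hence "q dvd x" using assms(1) by (simp add: coprime_dvd_mult_right_iff coprime_commute)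
    with assms(2) show False using zdvd_imp_le[of q x] by auto
  qed
  moreover have "(a*x) mod q \<ge> 0" "(a*x) mod q < q" using q by auto
  ultimately show ?thesis by auto
qed

lemma good_A: "good q (setA q)"
  unfolding good_def setA_def
proof (intro conjI allI impI)
  fix a x assume a: "coprime a (int q)" and x: "x \<in> {l \<in> {1..int q - 1}. coprime l (int q)}"
  have "coprime ((a*x) mod int q) (int q)"
    using a x by (simp add: coprime_commute[of _ "int q"])
  thus "(a*x) mod int q \<in> {l \<in> {1..int q - 1}. coprime l (int q)}"
    using mod_nz[OF a] x by auto
qed auto

lemma good_B: assumes p: "prime p" shows "good (p^m) (setB p (p^m) j)"
  unfolding good_def setB_def
proof (intro conjI allI impI)
  fix a x assume a: "coprime a (int (p^m))" and x: "x \<in> {x \<in> {1..int (p^m) - 1}. int p ^ j dvd x \<and> \<not> int p ^ (j + 1) dvd x}"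
  have p1: "int p > 1" using p prime_gt_1_nat by auto
  have "int p ^ j \<le> x" using x by (auto intro: zdvd_imp_le)
  also have "x < int p ^ m" using x by auto
  finally have "j < m" using p1 by (simp add: power_strict_increasing_iff)
  have m0: "m > 0" using \<open>j < m\<close> by auto
  have cp: "coprime a (int p)" using a m0 by simp
  have d1: "int p ^ j dvd int p ^ m" "int p ^ (j+1) dvd int p ^ m"
    by (rule le_imp_power_dvd, use \<open>j < m\<close> in simp)+
  have "int p ^ j dvd (a*x) mod int (p^m) \<longleftrightarrow> int p ^ j dvd a*x"
    using d1 by (simp add: dvd_mod_iff)
  also have "\<dots> \<longleftrightarrow> int p ^ j dvd x" using cp
    by (simp add: coprime_dvd_mult_right_iff coprime_commute)
  finally have i1: "int p ^ j dvd (a*x) mod int (p^m) \<longleftrightarrow> int p ^ j dvd x" .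
  have "int p ^ (j+1) dvd (a*x) mod int (p^m) \<longleftrightarrow> int p ^ (j+1) dvd a*x"
    using d1 by (simp add: dvd_mod_iff)
  also have "\<dots> \<longleftrightarrow> int p ^ (j+1) dvd x" using cp
    by (simp add: coprime_dvd_mult_right_iff coprime_commute)
  finally have i2: "int p ^ (j+1) dvd (a*x) mod int (p^m) \<longleftrightarrow> int p ^ (j+1) dvd x" .
  show "(a*x) mod int (p^m) \<in> {x \<in> {1..int (p^m) - 1}. int p ^ j dvd x \<and> \<not> int p ^ (j + 1) dvd x}"
    using mod_nz[OF a] x i1 i2 by auto
qed auto

lemma CS_val:
  assumes p: "prime p" and g: "good (p^m) L" and k: "\<not> int (p^m) dvd k"
  shows "CS (p^m) L k = CS (p^m) L (int p ^ multiplicity (int p) k)"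
proof -
  have k0: "k \<noteq> 0" using k by auto
  have pp: "prime (int p)" using p by simp
  have nu: "\<not> is_unit (int p)" using pp not_prime_unit by blast
  obtain a where a: "k = int p ^ multiplicity (int p) k * a" "\<not> int p dvd a"
    using multiplicity_decompose'[OF k0 nu] by blast
  have "coprime a (int p)" using prime_imp_coprime[OF pp a(2)] by (simp add: coprime_commute)
  hence cop: "coprime a (int (p^m))" by simp
  have q0: "p^m > 0" using p prime_gt_0_nat by simp
  have fin: "finite L" using g unfolding good_def by (meson finite_atLeastAtMost_int finite_subset)
  have sub: "L \<subseteq> {0..int (p^m) - 1}" using g unfolding good_def by auto
  show ?thesis
    apply (subst a(1))
    apply (rule CS_unit[OF q0 cop sub fin])
    using g cop unfolding good_def by blast
qed

lemma val_facts:
  fixes p :: nat and x :: int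
  assumes p: "prime p" and x: "x \<noteq> 0"
  shows "int p ^ multiplicity (int p) x dvd x" "\<not> int p ^ Suc (multiplicity (int p) x) dvd x"
proof -
  have pp: "prime (int p)" using p by simp
  have nu: "\<not> is_unit (int p)" using pp not_prime_unit by blast
  show "int p ^ multiplicity (int p) x dvd x" by (rule multiplicity_dvd)
  show "\<not> int p ^ Suc (multiplicity (int p) x) dvd x"
    using power_dvd_iff_le_multiplicity[OF x nu, of "Suc (multiplicity (int p) x)"] by simp
qed

lemma val_neg:
  fixes p :: nat and x :: int
  assumes p: "prime p" and x: "x \<noteq> 0"
  shows "multiplicity (int p) (-x) = multiplicity (int p) x"
  by (rule multiplicity_eqI) (use val_facts[OF p x] in simp_all)

lemma val_lt:
  assumes "\<not> int (p^m) dvd k" shows "multiplicity (int p) k < m"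
proof (rule ccontr)
  assume "\<not> multiplicity (int p) k < m"
  hence "int p ^ m dvd k" by (intro multiplicity_dvd') simp
  with assms show False by simp
qed

lemma val_F1:
  fixes p :: nat and q1 q2 :: int
  assumes p: "prime p" and q1: "q1 \<noteq> 0" and lt: "multiplicity (int p) q1 < multiplicity (int p) q2"
  shows "multiplicity (int p) (q1+q2) = multiplicity (int p) q1" "multiplicity (int p) (q1-q2) = multiplicity (int p) q1"
proof -
  let ?v = "multiplicity (int p) q1"
  have a: "int p ^ ?v dvd q1" "\<not> int p ^ Suc ?v dvd q1" using val_facts[OF p q1] by auto
  have b: "int p ^ Suc ?v dvd q2" using lt by (intro multiplicity_dvd') simp
  hence b': "int p ^ ?v dvd q2" by (rule dvd_trans[rotated]) (simp add: le_imp_power_dvd)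
  show "multiplicity (int p) (q1+q2) = ?v"
  proof (rule multiplicity_eqI)
    show "int p ^ ?v dvd q1 + q2" using a b' by simp
    show "\<not> int p ^ Suc ?v dvd q1 + q2"
    proof
      assume "int p ^ Suc ?v dvd q1 + q2"
      hence "int p ^ Suc ?v dvd (q1 + q2) - q2" using b by (rule dvd_diff)
      with a show False by simp
    qed
  qed
  show "multiplicity (int p) (q1-q2) = ?v"
  proof (rule multiplicity_eqI)
    show "int p ^ ?v dvd q1 - q2" using a b' by simp
    show "\<not> int p ^ Suc ?v dvd q1 - q2"
    proof
      assume "int p ^ Suc ?v dvd q1 - q2"
      hence "int p ^ Suc ?v dvd (q1 - q2) + q2" using b by (rule dvd_add)
      with a show False by simp
    qed
  qed
qed

lemma val_F2:
  fixes p :: nat and q1 q2 :: int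
  assumes p: "prime p" and odd: "odd p" and q1: "q1 \<noteq> 0" and nz: "q1+q2 \<noteq> 0" "q1-q2 \<noteq> 0"
    and eq: "multiplicity (int p) q1 = multiplicity (int p) q2"
  shows "(multiplicity (int p) (q1+q2) = multiplicity (int p) q1 \<and> multiplicity (int p) q1 \<le> multiplicity (int p) (q1-q2))
       \<or> (multiplicity (int p) (q1-q2) = multiplicity (int p) q1 \<and> multiplicity (int p) q1 \<le> multiplicity (int p) (q1+q2))"
proof -
  let ?v = "multiplicity (int p) q1"
  have pp: "prime (int p)" using p by simp
  have nu: "\<not> is_unit (int p)" using pp not_prime_unit by blast
  have a: "int p ^ ?v dvd q1" "\<not> int p ^ Suc ?v dvd q1" using val_facts[OF p q1] by auto
  have b: "int p ^ ?v dvd q2" using eq by (metis multiplicity_dvd)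
  have ge1: "?v \<le> multiplicity (int p) (q1+q2)"
    using power_dvd_iff_le_multiplicity[OF nz(1) nu, of ?v] a b by simp
  have ge2: "?v \<le> multiplicity (int p) (q1-q2)"
    using power_dvd_iff_le_multiplicity[OF nz(2) nu, of ?v] a b by simp
  have "\<not> (Suc ?v \<le> multiplicity (int p) (q1+q2) \<and> Suc ?v \<le> multiplicity (int p) (q1-q2))"
  proof
    assume h: "Suc ?v \<le> multiplicity (int p) (q1+q2) \<and> Suc ?v \<le> multiplicity (int p) (q1-q2)"
    have "int p ^ Suc ?v dvd q1+q2" "int p ^ Suc ?v dvd q1-q2"
      using h multiplicity_dvd'[of "Suc ?v" "int p" "q1+q2"] multiplicity_dvd'[of "Suc ?v" "int p" "q1-q2"]
      by blast+
    hence "int p ^ Suc ?v dvd (q1+q2) + (q1-q2)" by (rule dvd_add)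
    hence d: "int p ^ Suc ?v dvd 2 * q1" by (simp add: algebra_simps mult_2)
    have "coprime (int p) 2" using odd by (simp add: coprime_commute[of _ 2])
    hence "coprime (int p ^ Suc ?v) 2" by simp
    hence "int p ^ Suc ?v dvd q1" using d by (simp add: coprime_dvd_mult_right_iff)
    with a show False by simp
  qed
  thus ?thesis using ge1 ge2 by auto
qed

definition SL :: "nat \<Rightarrow> nat \<Rightarrow> int set \<Rightarrow> nat \<Rightarrow> nat \<Rightarrow> nat \<Rightarrow> nat \<Rightarrow> complex poly" where
  "SL p q L a b c d = smult (of_nat (card L)) P0
     + smult (CS q L (int p ^ a) + CS q L (int p ^ b)) P1
     + smult (CS q L (int p ^ c) + CS q L (int p ^ d)) P2"

definition TT :: "nat \<Rightarrow> nat \<Rightarrow> nat \<Rightarrow> nat \<Rightarrow> nat \<Rightarrow> nat \<Rightarrow> complex poly list" where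
  "TT p m a b c d = SL p (p^m) (setA (p^m)) a b c d # map (\<lambda>j. SL p (p^m) (setB p (p^m) j) a b c d) [1..<m]"

lemma TT_sym: "TT p m a b c d = TT p m b a c d" "TT p m a b c d = TT p m a b d c"
  unfolding TT_def SL_def by (simp_all add: add.commute)

lemma sum_good:
  assumes p: "prime p" and g: "good (p^m) L"
    and h: "\<not> int (p^m) dvd q1" "\<not> int (p^m) dvd q2" "\<not> int (p^m) dvd (q1+q2)" "\<not> int (p^m) dvd (q1-q2)"
  shows "(\<Sum>l\<in>L. summand (p^m) q1 q2 l) = SL p (p^m) L (multiplicity (int p) q1) (multiplicity (int p) q2)
           (multiplicity (int p) (q1+q2)) (multiplicity (int p) (q1-q2))"
proof -
  have fin: "finite L" using g unfolding good_def by (meson finite_atLeastAtMost_int finite_subset)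
  show ?thesis unfolding sum_summand[OF fin] SL_def
    using CS_val[OF p g h(1)] CS_val[OF p g h(2)] CS_val[OF p g h(3)] CS_val[OF p g h(4)] by simp
qed

lemma tau_TT:
  assumes p: "prime p"
    and h: "\<not> int (p^m) dvd q1" "\<not> int (p^m) dvd q2" "\<not> int (p^m) dvd (q1+q2)" "\<not> int (p^m) dvd (q1-q2)"
  shows "tau p m q1 q2 = TT p m (multiplicity (int p) q1) (multiplicity (int p) q2)
           (multiplicity (int p) (q1+q2)) (multiplicity (int p) (q1-q2))"
  unfolding tau_def TT_def psi_def alpha_def
  using sum_good[OF p good_A h] sum_good[OF p good_B[OF p] h] by simp

theorem proposition3p1p2:
  fixes p m :: nat
  assumes "prime p" and "odd p" and "m \<ge> 2"
  shows "finite {tau p m q1 q2 | q1 q2.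
                   \<not> int (p ^ m) dvd q1 \<and> \<not> int (p ^ m) dvd q2 \<and>
                   \<not> int (p ^ m) dvd (q1 + q2) \<and> \<not> int (p ^ m) dvd (q1 - q2)}
       \<and> card {tau p m q1 q2 | q1 q2.
                   \<not> int (p ^ m) dvd q1 \<and> \<not> int (p ^ m) dvd q2 \<and>
                   \<not> int (p ^ m) dvd (q1 + q2) \<and> \<not> int (p ^ m) dvd (q1 - q2)} \<le> m ^ 2"
proof -
  let ?S = "{tau p m q1 q2 | q1 q2.
                   \<not> int (p ^ m) dvd q1 \<and> \<not> int (p ^ m) dvd q2 \<and>
                   \<not> int (p ^ m) dvd (q1 + q2) \<and> \<not> int (p ^ m) dvd (q1 - q2)}"
  define g where "g = (\<lambda>(x::nat, y::nat). if y < x then TT p m y x y y else TT p m x x x y)"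
  have sub: "?S \<subseteq> g ` ({..<m} \<times> {..<m})"
  proof
    fix t assume "t \<in> ?S"
    then obtain q1 q2 where t: "t = tau p m q1 q2" and
      h: "\<not> int (p^m) dvd q1" "\<not> int (p^m) dvd q2" "\<not> int (p^m) dvd (q1+q2)" "\<not> int (p^m) dvd (q1-q2)"
      by blast
    define v1 where "v1 = multiplicity (int p) q1"
    define v2 where "v2 = multiplicity (int p) q2"
    define vs where "vs = multiplicity (int p) (q1+q2)"
    define vd where "vd = multiplicity (int p) (q1-q2)"
    have tt: "t = TT p m v1 v2 vs vd" unfolding t v1_def v2_def vs_def vd_def
      by (rule tau_TT[OF assms(1) h])
    have lt: "v1 < m" "v2 < m" "vs < m" "vd < m"
      unfolding v1_def v2_def vs_def vd_def using h by (auto intro: val_lt)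
    have nz: "q1 \<noteq> 0" "q2 \<noteq> 0" "q1+q2 \<noteq> 0" "q1-q2 \<noteq> 0" using h by auto
    have "t = g (max v1 v2, max vs vd)"
    proof (cases "v1 < v2")
      case True
      hence "vs = v1" "vd = v1" unfolding vs_def vd_def v1_def v2_def
        using val_F1[OF assms(1) nz(1)] by auto
      thus ?thesis using True tt unfolding g_def by auto
    next
      case False
      show ?thesis
      proof (cases "v2 < v1")
        case True
        have "multiplicity (int p) (q2+q1) = v2" "multiplicity (int p) (q2-q1) = v2"
          using val_F1[OF assms(1) nz(2)] True unfolding v1_def v2_def by auto
        moreover have "q2 - q1 = - (q1 - q2)" by simp
        ultimately have "vs = v2" "vd = v2" unfolding vs_def vd_def
          using val_neg[OF assms(1) nz(4)] by (simp_all add: add.commute del: minus_diff_eq)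
        thus ?thesis using True tt TT_sym(1)[of p m v1 v2] unfolding g_def by auto
      next
        case False2: False
        hence eq: "v1 = v2" using False by auto
        have F2: "(vs = v1 \<and> v1 \<le> vd) \<or> (vd = v1 \<and> v1 \<le> vs)"
          using val_F2[OF assms(1,2) nz(1) nz(3,4)] eq unfolding v1_def v2_def vs_def vd_def by blast
        thus ?thesis
        proof
          assume a: "vs = v1 \<and> v1 \<le> vd"
          thus ?thesis using tt eq unfolding g_def by (auto simp: max_def)
        next
          assume a: "vd = v1 \<and> v1 \<le> vs"
          thus ?thesis using tt eq TT_sym(2)[of p m v1 v1 vs vd] unfolding g_def by (auto simp: max_def)
        qed
      qed
    qed
    moreover have "(max v1 v2, max vs vd) \<in> {..<m} \<times> {..<m}" using lt by auto
    ultimately show "t \<in> g ` ({..<m} \<times> {..<m})" by blast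
  qed
  have fin: "finite (g ` ({..<m} \<times> {..<m}))" by simp
  have "card ?S \<le> card (g ` ({..<m} \<times> {..<m}))" by (rule card_mono[OF fin sub])
  also have "\<dots> \<le> card ({..<m} \<times> {..<m})" by (rule card_image_le) simp
  also have "\<dots> = m^2" by (simp add: card_cartesian_product power2_eq_square)
  finally show ?thesis using finite_subset[OF sub fin] by simp
qed

end
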